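(* Let $X$ be a vector lattice and let $l : X \to \mathbb{R}$ be an order bounded linear functional. Then $\ker(l)$ is a Grothendieck subspace of $X$ if and only if the modulus $|l|$ of $l$ is the sum of some pair of Riesz homomorphisms $X \to \mathbb{R}$.
   Context: The modulus of an order bounded functional $l$ is $|l| = l \vee (-l)$ in the Riesz space of order bounded functionals. A Riesz homomorphism is a linear functional preserving finite lattice operations. A linear subspace $H$ of a vector lattice is called a Grothendieck subspace (or $G$-space) if for all $x, y \in H$ one has $x \vee y \vee 0 + x \wedge y \wedge 0 \in H$. *)

theory Defs
  imports Main "HOL-Analysis.Analysis"
begin

class vector_lattice = ordered_real_vector + lattice

definition order_bounded_functional :: "('a::vector_lattice \<Rightarrow> real) \<Rightarrow> bool" where
  "order_bounded_functional l \<longleftrightarrow> linear l \<and>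
     (\<forall>x y. \<exists>M. \<forall>z. x \<le> z \<and> z \<le> y \<longrightarrow> \<bar>l z\<bar> \<le> M)"

definition functional_le :: "('a::vector_lattice \<Rightarrow> real) \<Rightarrow> ('a \<Rightarrow> real) \<Rightarrow> bool" where
  "functional_le f g \<longleftrightarrow> (\<forall>x. 0 \<le> x \<longrightarrow> f x \<le> g x)"

definition is_modulus :: "('a::vector_lattice \<Rightarrow> real) \<Rightarrow> ('a \<Rightarrow> real) \<Rightarrow> bool" where
  "is_modulus l m \<longleftrightarrow> order_bounded_functional m \<and>
     functional_le l m \<and> functional_le (\<lambda>x. - l x) m \<and>
     (\<forall>g. order_bounded_functional g \<and> functional_le l g \<and> functional_le (\<lambda>x. - l x) g
          \<longrightarrow> functional_le m g)"

definition modulus :: "('a::vector_lattice \<Rightarrow> real) \<Rightarrow> ('a \<Rightarrow> real)" where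
  "modulus l = (THE m. is_modulus l m)"

definition riesz_hom :: "('a::vector_lattice \<Rightarrow> real) \<Rightarrow> bool" where
  "riesz_hom f \<longleftrightarrow> linear f \<and> (\<forall>x y. f (sup x y) = max (f x) (f y) \<and> f (inf x y) = min (f x) (f y))"

definition grothendieck_subspace :: "('a::vector_lattice) set \<Rightarrow> bool" where
  "grothendieck_subspace H \<longleftrightarrow> subspace H \<and>
     (\<forall>x\<in>H. \<forall>y\<in>H. sup (sup x y) 0 + inf (inf x y) 0 \<in> H)"

end

theory Submission
  imports Defs "HOL-Library.Lattice_Algebras"
begin

subclass (in vector_lattice) lattice_ab_group_add ..

lemma pos_neg_disj: "inf (sup t 0) (sup (-t) 0) = (0::'a::vector_lattice)"
proof -
  have e: "sup t 0 = sup (-t) 0 + t"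
    using prts[of t] pprt_neg[of t] unfolding pprt_def nprt_def
    by (metis add.commute add_diff_cancel diff_conv_add_uminus minus_add_cancel)
  have "inf (sup (-t) 0 + t) (sup (-t) 0 + 0) = sup (-t) 0 + inf t 0"
    by (simp only: add_inf_distrib_left)
  also have "\<dots> = 0"
  proof -
    have "sup (-t) 0 = - inf t 0" using pprt_neg[of t] unfolding pprt_def nprt_def .
    thus ?thesis by (metis add.left_inverse)
  qed
  finally show ?thesis using e by simp
qed

lemma sum_le0_disj:
  fixes s t :: "'a::vector_lattice"
  assumes "s + t \<le> 0" shows "inf (sup s 0) (sup t 0) = 0"
proof -
  have "s \<le> -t" using assms le_eq_neg by blast
  hence "sup s 0 \<le> sup (-t) 0" by (simp add: le_supI1)
  hence "inf (sup s 0) (sup t 0) \<le> inf (sup (-t) 0) (sup t 0)" by (simp add: le_infI1)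
  also have "\<dots> = 0" using pos_neg_disj[of t] by (simp add: inf_commute)
  finally show ?thesis by (simp add: antisym)
qed

lemma disj_sup: "inf x y = 0 \<Longrightarrow> sup x y = x + (y::'a::vector_lattice)"
  using add_eq_inf_sup[of x y] by simp

lemma diff_inf: "x - inf x z = sup (x - z) (0::'a::vector_lattice)"
  by (simp add: diff_inf_eq_sup add_sup_distrib_left sup_commute)

lemma pos_disj_diff: "inf u v = 0 \<Longrightarrow> sup (u - v) 0 = (u::'a::vector_lattice)"
proof -
  assume "inf u v = 0"
  have "sup (u - v) 0 = sup (u + (-v)) (v + (-v))" by simp
  also have "\<dots> = sup u v + (-v)" by (simp only: add_sup_distrib_right)
  also have "\<dots> = u" using disj_sup[OF \<open>inf u v = 0\<close>] by simp
  finally show ?thesis .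
qed

lemma riesz_dec:
  fixes w x y :: "'a::vector_lattice"
  assumes "0 \<le> w" "w \<le> x + y" "0 \<le> x" "0 \<le> y"
  shows "0 \<le> w - inf w x" "w - inf w x \<le> y" "0 \<le> inf w x" "inf w x \<le> x" "inf w x \<le> w"
proof -
  show "0 \<le> w - inf w x" using inf_le1[of w x] by (simp del: diff_inf_eq_sup)
  have "w - x \<le> y" using assms by (simp add: algebra_simps)
  thus "w - inf w x \<le> y" using diff_inf[of w x] assms by simp
  show "0 \<le> inf w x" "inf w x \<le> x" "inf w x \<le> w" using assms by auto
qed

lemma inf_add_le:
  fixes x y z :: "'a::vector_lattice"
  assumes "0 \<le> x" "0 \<le> y" "0 \<le> z"
  shows "inf (x + y) z \<le> inf x z + inf y z"
proof -
  define w where "w = inf (x + y) z"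
  have w0: "0 \<le> w" "w \<le> x + y" "w \<le> z" using assms by (auto simp: w_def)
  note d = riesz_dec[OF w0(1,2) assms(1,2)]
  have "w - inf w x \<le> w" using d(3) by (simp del: diff_inf_eq_sup)
  hence a1: "w - inf w x \<le> z" using w0(3) by (rule order_trans)
  have a: "w - inf w x \<le> inf y z" using a1 d(2) by (rule le_infI[rotated])
  have b: "inf w x \<le> inf x z" using w0(3) by (meson inf_le1 inf_le2 le_infI order_trans)
  have "w = inf w x + (w - inf w x)" by (simp del: diff_inf_eq_sup)
  also have "\<dots> \<le> inf x z + inf y z" using b a by (rule add_mono)
  finally show ?thesis unfolding w_def .
qed

lemma disj_add:
  fixes x y z :: "'a::vector_lattice"
  assumes "0 \<le> x" "0 \<le> y" "0 \<le> z" "inf x z = 0" "inf y z = 0"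
  shows "inf (x + y) z = 0"
  using inf_add_le[OF assms(1-3)] assms by (simp add: antisym)

lemma scale_inf:
  fixes x y :: "'a::vector_lattice"
  assumes "0 \<le> c" shows "c *\<^sub>R inf x y = inf (c *\<^sub>R x) (c *\<^sub>R y)"
proof (cases "c = 0")
  case True thus ?thesis by simp
next
  case False
  hence c: "0 < c" using assms by simp
  have 1: "c *\<^sub>R inf x y \<le> inf (c *\<^sub>R x) (c *\<^sub>R y)"
    using assms by (simp add: scaleR_left_mono)
  define w where "w = inf (c *\<^sub>R x) (c *\<^sub>R y)"
  have "w \<le> c *\<^sub>R x" "w \<le> c *\<^sub>R y" unfolding w_def by auto
  hence "(1/c) *\<^sub>R w \<le> (1/c) *\<^sub>R (c *\<^sub>R x)" "(1/c) *\<^sub>R w \<le> (1/c) *\<^sub>R (c *\<^sub>R y)"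
    using c by (auto intro!: scaleR_left_mono simp del: scaleR_scaleR)
  moreover have "(1/c) *\<^sub>R (c *\<^sub>R x) = x" "(1/c) *\<^sub>R (c *\<^sub>R y) = y" using c by auto
  ultimately have "(1/c) *\<^sub>R w \<le> inf x y" by simp
  hence "c *\<^sub>R ((1/c) *\<^sub>R w) \<le> c *\<^sub>R inf x y" by (rule scaleR_left_mono) (use c in simp)
  moreover have "c *\<^sub>R ((1/c) *\<^sub>R w) = w" using c by simp
  ultimately have "w \<le> c *\<^sub>R inf x y" by simp
  thus ?thesis using 1 unfolding w_def by (rule antisym[rotated])
qed

lemma disj_scale1:
  fixes x y :: "'a::vector_lattice"
  assumes "0 \<le> x" "0 \<le> y" "inf x y = 0" "0 \<le> c"
  shows "inf (c *\<^sub>R x) y = 0"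
proof (cases "c \<le> 1")
  case True
  have "c *\<^sub>R x \<le> 1 *\<^sub>R x" using True assms by (intro scaleR_right_mono)
  hence "inf (c *\<^sub>R x) y \<le> inf x y" by (simp add: le_infI1)
  moreover have "0 \<le> inf (c *\<^sub>R x) y" using assms by (simp add: scaleR_nonneg_nonneg)
  ultimately show ?thesis using assms by simp
next
  case False
  have "1 *\<^sub>R y \<le> c *\<^sub>R y" using False assms by (intro scaleR_right_mono) auto
  hence "inf (c *\<^sub>R x) y \<le> inf (c *\<^sub>R x) (c *\<^sub>R y)" by (simp add: le_infI2)
  also have "\<dots> = c *\<^sub>R inf x y" by (rule scale_inf[OF assms(4), symmetric])
  finally have "inf (c *\<^sub>R x) y \<le> 0" using assms by simp
  moreover have "0 \<le> inf (c *\<^sub>R x) y" using assms by (simp add: scaleR_nonneg_nonneg)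
  ultimately show ?thesis by simp
qed

lemma disj_scale:
  fixes x y :: "'a::vector_lattice"
  assumes "0 \<le> x" "0 \<le> y" "inf x y = 0" "0 \<le> c" "0 \<le> d"
  shows "inf (c *\<^sub>R x) (d *\<^sub>R y) = 0"
proof -
  have a: "inf (c *\<^sub>R x) y = 0" by (rule disj_scale1[OF assms(1-4)])
  have "0 \<le> c *\<^sub>R x" using assms by (simp add: scaleR_nonneg_nonneg)
  have "inf (d *\<^sub>R y) (c *\<^sub>R x) = 0"
    by (rule disj_scale1) (use a assms \<open>0 \<le> c *\<^sub>R x\<close> in \<open>auto simp: inf_commute\<close>)
  thus ?thesis by (simp add: inf_commute)
qed

definition posf :: "('a::vector_lattice \<Rightarrow> real) \<Rightarrow> bool" where
  "posf \<psi> \<longleftrightarrow> (\<forall>x. 0 \<le> x \<longrightarrow> 0 \<le> \<psi> x)"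

lemma pos_part_eq: "sup t 0 = sup (-t) 0 + (t::'a::vector_lattice)"
  using prts[of t] pprt_neg[of t] unfolding pprt_def nprt_def
  by (metis add.commute add_diff_cancel diff_conv_add_uminus minus_add_cancel)

lemma pn_diff: "sup x 0 - sup (-x) 0 = (x::'a::vector_lattice)"
  by (simp only: pos_part_eq[of x] add_diff_cancel_left')

lemma pos_neg_nonneg: "0 \<le> sup (t::'a::vector_lattice) 0" "0 \<le> sup (-t) 0"
  by auto

lemma lin:
  assumes "linear \<psi>"
  shows "\<psi> (x + y) = \<psi> x + \<psi> y" "\<psi> (x - y) = \<psi> x - \<psi> y" "\<psi> (-x) = - \<psi> x"
    "\<psi> 0 = 0" "\<psi> (c *\<^sub>R x) = c * \<psi> x"
  using assms by (auto simp: linear_add linear_diff linear_neg linear_0 linear_scale)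

lemma pos_mono:
  fixes \<psi> :: "'a::vector_lattice \<Rightarrow> real"
  assumes "linear \<psi>" "posf \<psi>" "x \<le> y" shows "\<psi> x \<le> \<psi> y"
proof -
  have "0 \<le> \<psi> (y - x)" using assms unfolding posf_def by simp
  thus ?thesis using lin[OF assms(1)] by simp
qed

lemma pos_ob:
  fixes \<psi> :: "'a::vector_lattice \<Rightarrow> real"
  assumes "linear \<psi>" "posf \<psi>" shows "order_bounded_functional \<psi>"
  unfolding order_bounded_functional_def
proof (intro conjI assms allI)
  fix x y :: 'a
  show "\<exists>M. \<forall>z. x \<le> z \<and> z \<le> y \<longrightarrow> \<bar>\<psi> z\<bar> \<le> M"
  proof (intro exI allI impI)
    fix z assume "x \<le> z \<and> z \<le> y"
    hence "\<psi> x \<le> \<psi> z" "\<psi> z \<le> \<psi> y" using pos_mono[OF assms] by auto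
    thus "\<bar>\<psi> z\<bar> \<le> \<bar>\<psi> x\<bar> + \<bar>\<psi> y\<bar>" by linarith
  qed
qed

lemma lin_eq_on_cone:
  fixes f g :: "'a::vector_lattice \<Rightarrow> real"
  assumes "linear f" "linear g" "\<And>x. 0 \<le> x \<Longrightarrow> f x = g x"
  shows "f = g"
proof
  fix x
  have "(x::'a) = sup x 0 - sup (-x) 0" using pn_diff[of x] by simp
  hence "f x = f (sup x 0) - f (sup (-x) 0)" "g x = g (sup x 0) - g (sup (-x) 0)"
    using lin(2)[OF assms(1)] lin(2)[OF assms(2)] by metis+
  thus "f x = g x" using assms(3)[OF pos_neg_nonneg(1)] assms(3)[OF pos_neg_nonneg(2)] by simp
qed

lemma sup_via_pos: "sup x y = sup (x - y) 0 + (y::'a::vector_lattice)"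
proof -
  have "sup (x - y) 0 + y = sup (x - y) (y - y) + y" by simp
  also have "\<dots> = sup (x - y + y) (y - y + y)" by (simp only: add_sup_distrib_right)
  finally show ?thesis by simp
qed

lemma RH:
  fixes \<psi> :: "'a::vector_lattice \<Rightarrow> real"
  assumes l: "linear \<psi>" and p: "posf \<psi>"
    and d: "\<And>x y. 0 \<le> x \<Longrightarrow> 0 \<le> y \<Longrightarrow> inf x y = 0 \<Longrightarrow> \<psi> x = 0 \<or> \<psi> y = 0"
  shows "riesz_hom \<psi>"
proof -
  have pp: "\<psi> (sup z 0) = max (\<psi> z) 0" for z
  proof -
    have "\<psi> (sup z 0) = 0 \<or> \<psi> (sup (-z) 0) = 0"
      using d[OF pos_neg_nonneg pos_neg_disj] .
    moreover have "\<psi> (sup z 0) = \<psi> (sup (-z) 0) + \<psi> z"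
      using pos_part_eq[of z] lin(1)[OF l] by metis
    moreover have "0 \<le> \<psi> (sup z 0)" "0 \<le> \<psi> (sup (-z) 0)"
      using p pos_neg_nonneg unfolding posf_def by blast+
    ultimately show ?thesis by linarith
  qed
  have s: "\<psi> (sup x y) = max (\<psi> x) (\<psi> y)" for x y
  proof -
    have "\<psi> (sup x y) = \<psi> (sup (x - y) 0) + \<psi> y" using sup_via_pos[of x y] lin(1)[OF l] by metis
    thus ?thesis using pp[of "x - y"] lin(2)[OF l] by simp
  qed
  have i: "\<psi> (inf x y) = min (\<psi> x) (\<psi> y)" for x y
  proof -
    have "inf x y = x + y - sup x y" using add_eq_inf_sup[of x y] by (metis add_diff_cancel_left')
    hence "\<psi> (inf x y) = \<psi> x + \<psi> y - \<psi> (sup x y)" using lin(1,2)[OF l] by metis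
    thus ?thesis using s[of x y] by simp
  qed
  show ?thesis unfolding riesz_hom_def using l s i by blast
qed

lemma rh_lin: "riesz_hom f \<Longrightarrow> linear f" unfolding riesz_hom_def by blast

lemma rh_pp: "riesz_hom f \<Longrightarrow> f (sup z 0) = max (f z) 0"
  unfolding riesz_hom_def using lin(4) by metis

lemma rh_pos: "riesz_hom f \<Longrightarrow> posf f"
  unfolding posf_def using rh_pp by (metis max.cobounded2 sup_absorb1)

lemma rh_abs: "riesz_hom f \<Longrightarrow> f (sup z 0 + sup (-z) 0) = \<bar>f z\<bar>"
proof -
  assume r: "riesz_hom f"
  have "f (sup z 0 + sup (-z) 0) = max (f z) 0 + max (f (-z)) 0"
    using rh_pp[OF r] lin(1)[OF rh_lin[OF r]] by metis
  thus ?thesis using lin(3)[OF rh_lin[OF r]] by simp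
qed

lemma rh_zero: "riesz_hom (\<lambda>x::'a::vector_lattice. 0::real)"
  unfolding riesz_hom_def by (simp add: linear_zero)

definition ext :: "('a::vector_lattice \<Rightarrow> real) \<Rightarrow> 'a \<Rightarrow> real" where
  "ext F0 x = F0 (sup x 0) - F0 (sup (-x) 0)"

lemma ext:
  fixes F0 :: "'a::vector_lattice \<Rightarrow> real"
  assumes add: "\<And>x y. 0 \<le> x \<Longrightarrow> 0 \<le> y \<Longrightarrow> F0 (x + y) = F0 x + F0 y"
    and hom: "\<And>c x. 0 \<le> c \<Longrightarrow> 0 \<le> x \<Longrightarrow> F0 (c *\<^sub>R x) = c * F0 x"
  shows "linear (ext F0)" "\<And>x. 0 \<le> x \<Longrightarrow> ext F0 x = F0 x"
proof -
  have key: "ext F0 x = F0 p - F0 q" if "0 \<le> p" "0 \<le> q" "x = p - q" for x p q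
  proof -
    have "sup x 0 + q = sup (-x) 0 + x + q" by (simp only: pos_part_eq[of x])
    also have "\<dots> = p + sup (-x) 0" using that(3) by (simp add: algebra_simps)
    finally have "sup x 0 + q = p + sup (-x) 0" .
    hence "F0 (sup x 0 + q) = F0 (p + sup (-x) 0)" by simp
    hence "F0 (sup x 0) + F0 q = F0 p + F0 (sup (-x) 0)"
      using add that by (simp add: add pos_neg_nonneg)
    thus ?thesis unfolding ext_def by simp
  qed
  have z: "F0 0 = 0" using add[of 0 0] by simp
  show "ext F0 x = F0 x" if "0 \<le> x" for x using key[of x 0 x] that z by simp
  have gen2: "\<And>a b::'a. (-c) *\<^sub>R a - (-c) *\<^sub>R b = c *\<^sub>R (b - a)" for c by (simp add: algebra_simps)
  have gen: "\<And>a b c d::'a. a + b - (c + d) = (a - c) + (b - d)" by (simp add: algebra_simps)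
  show "linear (ext F0)"
  proof (rule linearI)
    fix x y :: 'a
    have "ext F0 (x + y) = F0 (sup x 0 + sup y 0) - F0 (sup (-x) 0 + sup (-y) 0)"
    proof (rule key)
      show "0 \<le> sup x 0 + sup y 0" "0 \<le> sup (-x) 0 + sup (-y) 0" by (simp_all add: add_nonneg_nonneg)
      have "sup x 0 + sup y 0 - (sup (-x) 0 + sup (-y) 0) = (sup x 0 - sup (-x) 0) + (sup y 0 - sup (-y) 0)"
        by (rule gen)
      thus "x + y = sup x 0 + sup y 0 - (sup (-x) 0 + sup (-y) 0)" by (simp only: pn_diff)
    qed
    thus "ext F0 (x + y) = ext F0 x + ext F0 y"
      unfolding ext_def by (simp add: add pos_neg_nonneg)
  next
    fix c :: real and x :: 'a
    show "ext F0 (c *\<^sub>R x) = c *\<^sub>R ext F0 x"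
    proof (cases "0 \<le> c")
      case True
      have "ext F0 (c *\<^sub>R x) = F0 (c *\<^sub>R sup x 0) - F0 (c *\<^sub>R sup (-x) 0)"
      proof (rule key)
        show "0 \<le> c *\<^sub>R sup x 0" "0 \<le> c *\<^sub>R sup (-x) 0" using True by (simp_all add: scaleR_nonneg_nonneg)
        have "c *\<^sub>R sup x 0 - c *\<^sub>R sup (-x) 0 = c *\<^sub>R (sup x 0 - sup (-x) 0)" by (rule scaleR_diff_right[symmetric])
        thus "c *\<^sub>R x = c *\<^sub>R sup x 0 - c *\<^sub>R sup (-x) 0" by (simp only: pn_diff)
      qed
      thus ?thesis unfolding ext_def using True by (simp add: hom algebra_simps)
    next
      case False
      have "ext F0 (c *\<^sub>R x) = F0 ((-c) *\<^sub>R sup (-x) 0) - F0 ((-c) *\<^sub>R sup x 0)"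
      proof (rule key)
        have nc: "0 \<le> -c" using False by simp
        show "0 \<le> (-c) *\<^sub>R sup x 0" "0 \<le> (-c) *\<^sub>R sup (-x) 0"
          by (rule scaleR_nonneg_nonneg[OF nc pos_neg_nonneg(1)], rule scaleR_nonneg_nonneg[OF nc pos_neg_nonneg(2)])
        have "(-c) *\<^sub>R sup (-x) 0 - (-c) *\<^sub>R sup x 0 = c *\<^sub>R (sup x 0 - sup (-x) 0)" by (rule gen2)
        thus "c *\<^sub>R x = (-c) *\<^sub>R sup (-x) 0 - (-c) *\<^sub>R sup x 0" by (simp only: pn_diff)
      qed
      have nc: "0 \<le> -c" using False by simp
      have e1: "F0 ((-c) *\<^sub>R sup (-x) 0) = -c * F0 (sup (-x) 0)" by (rule hom[OF nc pos_neg_nonneg(2)])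
      have e2: "F0 ((-c) *\<^sub>R sup x 0) = -c * F0 (sup x 0)" by (rule hom[OF nc pos_neg_nonneg(1)])
      show ?thesis using \<open>ext F0 (c *\<^sub>R x) = _\<close> unfolding e1 e2 unfolding ext_def by (simp add: algebra_simps)
    qed
  qed
qed

definition P0 :: "('a::vector_lattice \<Rightarrow> real) \<Rightarrow> 'a \<Rightarrow> real" where
  "P0 l x = Sup (l ` {u. 0 \<le> u \<and> u \<le> x})"

context
  fixes l :: "'a::vector_lattice \<Rightarrow> real"
  assumes ob: "order_bounded_functional l"
begin

lemma ob_lin: "linear l" using ob unfolding order_bounded_functional_def by blast

lemma P0_bdd: "bdd_above (l ` {u. 0 \<le> u \<and> u \<le> x})"
proof -
  obtain M where M: "\<And>z. 0 \<le> z \<and> z \<le> x \<Longrightarrow> \<bar>l z\<bar> \<le> M"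
    using ob unfolding order_bounded_functional_def by blast
  show ?thesis
  proof (rule bdd_aboveI2)
    fix u assume "u \<in> {u. 0 \<le> u \<and> u \<le> x}"
    hence "\<bar>l u\<bar> \<le> M" using M by blast
    thus "l u \<le> M" by (rule abs_le_D1)
  qed
qed

lemma P0_upper: "0 \<le> u \<Longrightarrow> u \<le> x \<Longrightarrow> l u \<le> P0 l x"
  unfolding P0_def by (rule cSUP_upper) (auto intro: P0_bdd)

lemma P0_least: "0 \<le> x \<Longrightarrow> (\<And>u. 0 \<le> u \<Longrightarrow> u \<le> x \<Longrightarrow> l u \<le> B) \<Longrightarrow> P0 l x \<le> B"
  unfolding P0_def by (rule cSUP_least) auto

lemma P0_ge: "0 \<le> x \<Longrightarrow> l x \<le> P0 l x" "0 \<le> x \<Longrightarrow> 0 \<le> P0 l x"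
  using P0_upper[of x x] P0_upper[of 0 x] lin(4)[OF ob_lin] by auto

lemma P0_add:
  assumes "0 \<le> x" "0 \<le> y" shows "P0 l (x + y) = P0 l x + P0 l y"
proof (rule antisym)
  show "P0 l (x + y) \<le> P0 l x + P0 l y"
  proof (rule P0_least)
    show "0 \<le> x + y" using assms by simp
    fix w assume w: "0 \<le> w" "w \<le> x + y"
    note d = riesz_dec[OF w assms]
    have "l w = l (inf w x) + l (w - inf w x)" using lin(1)[OF ob_lin, of "inf w x" "w - inf w x"]
      by (simp del: diff_inf_eq_sup)
    also have "\<dots> \<le> P0 l x + P0 l y"
      using P0_upper[OF d(3,4)] P0_upper[OF d(1,2)] by (rule add_mono)
    finally show "l w \<le> P0 l x + P0 l y" .
  qed
next
  have "P0 l x \<le> P0 l (x + y) - P0 l y"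
  proof (rule P0_least[OF assms(1)])
    fix u assume u: "0 \<le> u" "u \<le> x"
    have "P0 l y \<le> P0 l (x + y) - l u"
    proof (rule P0_least[OF assms(2)])
      fix v assume v: "0 \<le> v" "v \<le> y"
      have "0 \<le> u + v" using u v by simp
      moreover have "u + v \<le> x + y" using u(2) v(2) by (rule add_mono)
      ultimately have "l (u + v) \<le> P0 l (x + y)" by (rule P0_upper)
      thus "l v \<le> P0 l (x + y) - l u" using lin(1)[OF ob_lin] by simp
    qed
    thus "l u \<le> P0 l (x + y) - P0 l y" by simp
  qed
  thus "P0 l x + P0 l y \<le> P0 l (x + y)" by simp
qed

lemma P0_hom:
  assumes "0 \<le> c" "0 \<le> x" shows "P0 l (c *\<^sub>R x) = c * P0 l x"
proof (cases "c = 0")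
  case True
  have "{u. 0 \<le> u \<and> u \<le> (0::'a)} = {0}" by auto
  thus ?thesis using True unfolding P0_def by (simp add: lin(4)[OF ob_lin])
next
  case False
  hence c: "0 < c" using assms by simp
  have cx: "0 \<le> c *\<^sub>R x" using assms by (simp add: scaleR_nonneg_nonneg)
  show ?thesis
  proof (rule antisym)
    show "P0 l (c *\<^sub>R x) \<le> c * P0 l x"
    proof (rule P0_least[OF cx])
      fix w assume w: "0 \<le> w" "w \<le> c *\<^sub>R x"
      have "(1/c) *\<^sub>R w \<le> (1/c) *\<^sub>R (c *\<^sub>R x)" using w c by (intro scaleR_left_mono) auto
      hence a: "(1/c) *\<^sub>R w \<le> x" using c by simp
      have b: "0 \<le> (1/c) *\<^sub>R w" using w c by (simp add: scaleR_nonneg_nonneg)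
      have "l w = c * l ((1/c) *\<^sub>R w)" using c lin(5)[OF ob_lin, of "1/c" w] by simp
      also have "\<dots> \<le> c * P0 l x" using P0_upper[OF b a] c by simp
      finally show "l w \<le> c * P0 l x" .
    qed
  next
    have "P0 l x \<le> P0 l (c *\<^sub>R x) / c"
    proof (rule P0_least[OF assms(2)])
      fix u assume u: "0 \<le> u" "u \<le> x"
      have "l (c *\<^sub>R u) \<le> P0 l (c *\<^sub>R x)"
        using u c by (intro P0_upper) (auto simp: scaleR_nonneg_nonneg intro: scaleR_left_mono)
      thus "l u \<le> P0 l (c *\<^sub>R x) / c" using c lin(5)[OF ob_lin] by (simp add: field_simps)
    qed
    thus "c * P0 l x \<le> P0 l (c *\<^sub>R x)" using c by (simp add: field_simps)
  qed
qed

definition "modc = (\<lambda>x. 2 * ext (P0 l) x - l x)"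

lemma P_lin: "linear (ext (P0 l))" and P_cone: "0 \<le> x \<Longrightarrow> ext (P0 l) x = P0 l x"
  using ext[of "P0 l", OF P0_add P0_hom] by auto

lemma modc_lin: "linear modc"
proof -
  note a = lin[OF P_lin] and b = lin[OF ob_lin]
  show ?thesis unfolding modc_def
    by (rule linearI) (simp_all add: a b algebra_simps)
qed

lemma modc_cone: "0 \<le> x \<Longrightarrow> modc x = 2 * P0 l x - l x"
  unfolding modc_def using P_cone by simp

lemma modc_ism: "is_modulus l modc"
proof -
  have ge: "l x \<le> modc x" "- l x \<le> modc x" if "0 \<le> x" for x
    using P0_ge[OF that] modc_cone[OF that] by auto
  have pos: "posf modc" unfolding posf_def
  proof (intro allI impI)
    fix x :: 'a assume "0 \<le> x"
    from ge[OF this] show "0 \<le> modc x" by linarith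
  qed
  have min: "functional_le modc g" if g: "order_bounded_functional g" "functional_le l g"
    "functional_le (\<lambda>x. - l x) g" for g
    unfolding functional_le_def
  proof (intro allI impI)
    fix x :: 'a assume x: "0 \<le> x"
    have gl: "linear g" using g(1) unfolding order_bounded_functional_def by blast
    have "P0 l x \<le> (g x + l x) / 2"
    proof (rule P0_least[OF x])
      fix u assume u: "0 \<le> u" "u \<le> x"
      have "l u \<le> g u" using g(2) u unfolding functional_le_def by blast
      moreover have "- l (x - u) \<le> g (x - u)" using g(3) u unfolding functional_le_def by simp
      ultimately show "l u \<le> (g x + l x) / 2" using lin(2)[OF gl] lin(2)[OF ob_lin] by simp
    qed
    thus "modc x \<le> g x" using modc_cone[OF x] by simp
  qed
  show ?thesis unfolding is_modulus_def
  proof (intro conjI allI impI)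
    show "order_bounded_functional modc" by (rule pos_ob[OF modc_lin pos])
    show "functional_le l modc" "functional_le (\<lambda>x. - l x) modc"
      unfolding functional_le_def using ge by auto
    fix g assume "order_bounded_functional g \<and> functional_le l g \<and> functional_le (\<lambda>x. - l x) g"
    thus "functional_le modc g" using min by blast
  qed
qed

lemma ism_parts:
  assumes "is_modulus l m"
  shows "order_bounded_functional m" "functional_le l m" "functional_le (\<lambda>x. - l x) m"
    "\<And>g. order_bounded_functional g \<Longrightarrow> functional_le l g \<Longrightarrow> functional_le (\<lambda>x. - l x) g
          \<Longrightarrow> functional_le m g"
  using assms unfolding is_modulus_def by auto

lemma ism_unique: "is_modulus l m1 \<Longrightarrow> is_modulus l m2 \<Longrightarrow> m1 = m2"
proof -
  assume a: "is_modulus l m1" "is_modulus l m2"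
  have le: "functional_le m1 m2" "functional_le m2 m1"
    using ism_parts(4)[OF a(1) ism_parts(1-3)[OF a(2)]] ism_parts(4)[OF a(2) ism_parts(1-3)[OF a(1)]] by auto
  have "linear m1" "linear m2" using ism_parts(1)[OF a(1)] ism_parts(1)[OF a(2)]
    unfolding order_bounded_functional_def by auto
  thus ?thesis
  proof (rule lin_eq_on_cone)
    fix x :: 'a assume "0 \<le> x"
    thus "m1 x = m2 x" using le unfolding functional_le_def by (meson order_antisym)
  qed
qed

lemma modulus_eq: "modulus l = modc"
  unfolding modulus_def by (rule the_equality[where P="is_modulus l", OF modc_ism]) (rule ism_unique[OF _ modc_ism])

lemma mod_ism: "is_modulus l (modulus l)"
  using modc_ism modulus_eq by simp

lemma mod_cone: "0 \<le> x \<Longrightarrow> modulus l x = 2 * P0 l x - l x"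
  using modc_cone modulus_eq by simp

lemma mod_lin: "linear (modulus l)"
  using ism_parts(1)[OF mod_ism] unfolding order_bounded_functional_def by auto

lemma mod_ge: "0 \<le> x \<Longrightarrow> l x \<le> modulus l x" "0 \<le> x \<Longrightarrow> - l x \<le> modulus l x"
  using ism_parts(2,3)[OF mod_ism] unfolding functional_le_def by auto

lemma mod_pos: "posf (modulus l)"
  unfolding posf_def
proof (intro allI impI)
  fix x :: 'a assume "0 \<le> x"
  from mod_ge[OF this] mod_ge(2)[OF this] show "0 \<le> modulus l x" by linarith
qed

lemma mod_abs: "\<bar>l z\<bar> \<le> modulus l (sup z 0 + sup (-z) 0)"
proof -
  have "l z = l (sup z 0) - l (sup (-z) 0)" using pn_diff[of z] lin(2)[OF ob_lin] by metis
  moreover have "modulus l (sup z 0 + sup (-z) 0) = modulus l (sup z 0) + modulus l (sup (-z) 0)"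
    using lin(1)[OF mod_lin] by blast
  ultimately show ?thesis using mod_ge[OF pos_neg_nonneg(1)[of z]] mod_ge[OF pos_neg_nonneg(2)[of z]] by linarith
qed

lemma mod_nz: assumes "0 \<le> x" "modulus l x \<noteq> 0" shows "\<exists>u. 0 \<le> u \<and> u \<le> x \<and> l u \<noteq> 0"
proof (rule ccontr)
  assume "\<not> ?thesis"
  hence z: "\<And>u. 0 \<le> u \<Longrightarrow> u \<le> x \<Longrightarrow> l u = 0" by blast
  have "P0 l x \<le> 0" by (rule P0_least[OF assms(1)]) (use z in auto)
  moreover have "0 \<le> P0 l x" using P0_ge(2)[OF assms(1)] .
  moreover have "l x = 0" using z[OF assms(1)] by simp
  ultimately show False using assms mod_cone by simp
qed

end

lemma sup_diff_r: "sup (x - z) (y - z) = sup x y - (z::'a::vector_lattice)"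
  using add_sup_distrib_right[of x y "-z"] by simp
lemma inf_diff_r: "inf (x - z) (y - z) = inf x y - (z::'a::vector_lattice)"
  using add_inf_distrib_right[of x y "-z"] by simp

definition Gp :: "('a::vector_lattice \<Rightarrow> real) \<Rightarrow> bool" where
  "Gp l \<longleftrightarrow> (\<forall>p q. l p = 0 \<longrightarrow> l q = 0 \<longrightarrow> l (sup (sup p q) 0 + inf (inf p q) 0) = 0)"

lemma patA:
  fixes l :: "'a::vector_lattice \<Rightarrow> real"
  assumes l: "linear l"
    and G: "Gp l"
    and pos: "0 \<le> x" "0 \<le> y" "0 \<le> z"
    and dj: "inf x y = 0" "inf x z = 0" "inf y z = 0"
    and v: "l y = l x" "l z = l x" "l x \<noteq> 0"
  shows False
proof -
  have s: "sup (sup (x - z) (y - z)) 0 = x + y"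
    unfolding sup_diff_r disj_sup[OF dj(1)]
    by (rule pos_disj_diff) (rule disj_add[OF pos dj(2,3)])
  have "-z \<le> 0" using pos by simp
  hence i: "inf (inf (x - z) (y - z)) 0 = - z"
    unfolding inf_diff_r dj(1) by (simp add: inf_absorb1)
  have "l (sup (sup (x - z) (y - z)) 0 + inf (inf (x - z) (y - z)) 0) = 0"
    using G unfolding Gp_def using v lin[OF l] by auto
  hence "l (x + y + - z) = 0" unfolding s i .
  thus False using v lin[OF l] by simp
qed

lemma patB:
  fixes l :: "'a::vector_lattice \<Rightarrow> real"
  assumes l: "linear l"
    and G: "Gp l"
    and pos: "0 \<le> x" "0 \<le> y" "0 \<le> z"
    and dj: "inf x y = 0" "inf x z = 0" "inf y z = 0"
    and v: "l y = l x" "l z = - l x" "l x \<noteq> 0"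
  shows False
proof -
  have "0 \<le> x + y + z" using pos by (simp add: add_nonneg_nonneg)
  hence s: "sup (sup (x + z) (y + z)) 0 = x + y + z"
    unfolding add_sup_distrib_right[symmetric] disj_sup[OF dj(1)] by (simp add: sup_absorb1)
  have i: "inf (inf (x + z) (y + z)) 0 = 0"
    unfolding add_inf_distrib_right[symmetric] dj(1) using pos by (simp add: inf_absorb2)
  have "l (sup (sup (x + z) (y + z)) 0 + inf (inf (x + z) (y + z)) 0) = 0"
    using G unfolding Gp_def using v lin[OF l] by auto
  hence "l (x + y + z) = 0" unfolding s i by simp
  thus False using v lin[OF l] by simp
qed

lemma K3:
  fixes l :: "'a::vector_lattice \<Rightarrow> real"
  assumes l: "linear l"
    and G: "Gp l"
    and pos: "0 \<le> x" "0 \<le> y" "0 \<le> z"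
    and dj: "inf x y = 0" "inf x z = 0" "inf y z = 0"
  shows "l x = 0 \<or> l y = 0 \<or> l z = 0"
proof (rule ccontr)
  assume "\<not> ?thesis"
  hence nz: "l x \<noteq> 0" "l y \<noteq> 0" "l z \<noteq> 0" by auto
  define x' where "x' = (1 / \<bar>l x\<bar>) *\<^sub>R x"
  define y' where "y' = (1 / \<bar>l y\<bar>) *\<^sub>R y"
  define z' where "z' = (1 / \<bar>l z\<bar>) *\<^sub>R z"
  have p': "0 \<le> x'" "0 \<le> y'" "0 \<le> z'" unfolding x'_def y'_def z'_def
    using pos by (simp_all add: scaleR_nonneg_nonneg)
  have d': "inf x' y' = 0" "inf x' z' = 0" "inf y' z' = 0"
    unfolding x'_def y'_def z'_def using pos dj by (simp_all add: disj_scale)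
  have d'': "inf y' x' = 0" "inf z' x' = 0" "inf z' y' = 0" using d' by (simp_all add: inf_commute)
  have vx: "l x' = 1 \<or> l x' = -1" unfolding x'_def lin(5)[OF l] using nz by (simp add: abs_if)
  have vy: "l y' = 1 \<or> l y' = -1" unfolding y'_def lin(5)[OF l] using nz by (simp add: abs_if)
  have vz: "l z' = 1 \<or> l z' = -1" unfolding z'_def lin(5)[OF l] using nz by (simp add: abs_if)
  note A = patA[OF l G] and B = patB[OF l G]
  show False
  proof (cases "l y' = l x'")
    case True
    show False
    proof (cases "l z' = l x'")
      case True2: True
      show False by (rule A[OF p' d' True True2]) (use vx in auto)
    next
      case False
      hence zx: "l z' = - l x'" using vx vz by auto
      show False by (rule B[OF p' d' True zx]) (use vx in auto)
    qed
  next
    case False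
    hence yx: "l y' = - l x'" using vx vy by auto
    show False
    proof (cases "l z' = l x'")
      case True
      show False by (rule B[OF p'(1,3,2) d'(2,1) d''(3) True yx]) (use vx in auto)
    next
      case False
      hence zy: "l z' = l y'" using vx vy vz yx by auto
      have xy: "l x' = - l y'" using yx by simp
      show False by (rule B[OF p'(2,3,1) d'(3) d''(1,2) zy xy]) (use vy in auto)
    qed
  qed
qed

lemma K3m:
  fixes l :: "'a::vector_lattice \<Rightarrow> real"
  assumes ob: "order_bounded_functional l"
    and G: "Gp l"
    and pos: "0 \<le> x" "0 \<le> y" "0 \<le> z"
    and dj: "inf x y = 0" "inf x z = 0" "inf y z = 0"
  shows "modulus l x = 0 \<or> modulus l y = 0 \<or> modulus l z = 0"
proof (rule ccontr)
  assume "\<not> ?thesis"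
  then obtain u v w where u: "0 \<le> u" "u \<le> x" "l u \<noteq> 0" and v: "0 \<le> v" "v \<le> y" "l v \<noteq> 0"
    and w: "0 \<le> w" "w \<le> z" "l w \<noteq> 0"
    using mod_nz[OF ob pos(1)] mod_nz[OF ob pos(2)] mod_nz[OF ob pos(3)] by blast
  have sub: "inf a b = 0" if "0 \<le> a" "a \<le> c" "0 \<le> b" "b \<le> d" "inf c d = 0" for a b c d :: 'a
  proof -
    have "inf a b \<le> inf c d" using that by (intro inf_mono)
    thus ?thesis using that by (simp add: order_antisym)
  qed
  have "l u = 0 \<or> l v = 0 \<or> l w = 0"
    by (rule K3[OF ob_lin[OF ob] G u(1) v(1) w(1) sub[OF u(1,2) v(1,2) dj(1)]
      sub[OF u(1,2) w(1,2) dj(2)] sub[OF v(1,2) w(1,2) dj(3)]])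
  thus False using u v w by blast
qed

definition K3p :: "('a::vector_lattice \<Rightarrow> real) \<Rightarrow> bool" where
  "K3p \<phi> \<longleftrightarrow> (\<forall>x y z. 0 \<le> x \<longrightarrow> 0 \<le> y \<longrightarrow> 0 \<le> z \<longrightarrow> inf x y = 0 \<longrightarrow> inf x z = 0 \<longrightarrow> inf y z = 0
      \<longrightarrow> \<phi> x = 0 \<or> \<phi> y = 0 \<or> \<phi> z = 0)"

lemma inf0: "0 \<le> inf u v \<Longrightarrow> inf u v \<le> w \<Longrightarrow> w = 0 \<Longrightarrow> inf u (v::'a::vector_lattice) = 0"
  by (simp add: order_antisym)

locale dec =
  fixes \<phi> :: "'a::vector_lattice \<Rightarrow> real" and a b :: 'a
  assumes l: "linear \<phi>" and p: "posf \<phi>" and k: "K3p \<phi>"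
    and a0: "0 \<le> a" and b0: "0 \<le> b" and ab: "inf a b = 0" and pa: "\<phi> a = 1" and pb: "0 < \<phi> b"
begin

lemma K: "0 \<le> x \<Longrightarrow> 0 \<le> y \<Longrightarrow> 0 \<le> z \<Longrightarrow> inf x y = 0 \<Longrightarrow> inf x z = 0 \<Longrightarrow> inf y z = 0
      \<Longrightarrow> \<phi> x = 0 \<or> \<phi> y = 0 \<or> \<phi> z = 0"
  using k unfolding K3p_def by blast

lemma pf: "0 \<le> x \<Longrightarrow> 0 \<le> \<phi> x" using p unfolding posf_def by blast

lemma mono: "x \<le> y \<Longrightarrow> \<phi> x \<le> \<phi> y" by (rule pos_mono[OF l p])

lemmas L = lin[OF l]

lemma ta0: "0 \<le> t \<Longrightarrow> 0 \<le> t *\<^sub>R a" using a0 by (simp add: scaleR_nonneg_nonneg)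

lemma tab: "0 \<le> t \<Longrightarrow> inf (t *\<^sub>R a) b = 0" by (rule disj_scale1[OF a0 b0 ab])

lemma const:
  assumes x: "0 \<le> x" and s: "\<phi> x < s" and st: "s \<le> t"
  shows "\<phi> (inf x (t *\<^sub>R a)) = \<phi> (inf x (s *\<^sub>R a))"
proof -
  have s0: "0 \<le> s" using pf[OF x] s by simp
  have t0: "0 \<le> t" using s0 st by simp
  have sat: "s *\<^sub>R a \<le> t *\<^sub>R a" using st a0 by (rule scaleR_right_mono)
  define d where "d = inf x (t *\<^sub>R a) - inf x (s *\<^sub>R a)"
  define r where "r = sup (s *\<^sub>R a - x) 0"
  have is0: "0 \<le> inf x (s *\<^sub>R a)" using x ta0[OF s0] by simp
  have "inf x (s *\<^sub>R a) \<le> inf x (t *\<^sub>R a)" using sat by (intro inf_mono) auto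
  hence d0: "0 \<le> d" unfolding d_def by (simp only: diff_ge_0_iff_ge)
  have "d \<le> inf x (t *\<^sub>R a)" unfolding d_def using is0 by (simp only: diff_le_eq le_add_same_cancel1)
  hence dta: "d \<le> t *\<^sub>R a" by (meson inf_le2 order_trans)
  have "d \<le> x - inf x (s *\<^sub>R a)" unfolding d_def by (rule diff_right_mono[OF inf_le1])
  hence dx: "d \<le> sup (x - s *\<^sub>R a) 0" by (simp only: diff_inf)
  have r0: "0 \<le> r" unfolding r_def by simp
  have "s *\<^sub>R a - x \<le> s *\<^sub>R a" using x by simp
  hence rsa: "r \<le> s *\<^sub>R a" unfolding r_def using ta0[OF s0] by simp
  have db: "inf d b = 0"
  proof (rule inf0)
    show "0 \<le> inf d b" using d0 b0 by simp
    show "inf d b \<le> inf (t *\<^sub>R a) b" using dta by (intro inf_mono) auto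
    show "inf (t *\<^sub>R a) b = 0" by (rule tab[OF t0])
  qed
  have dr: "inf d r = 0"
  proof (rule inf0)
    show "0 \<le> inf d r" using d0 r0 by simp
    show "inf d r \<le> inf (sup (x - s *\<^sub>R a) 0) (sup (s *\<^sub>R a - x) 0)"
      using dx unfolding r_def by (intro inf_mono) auto
    show "inf (sup (x - s *\<^sub>R a) 0) (sup (s *\<^sub>R a - x) 0) = 0" by (rule sum_le0_disj) simp
  qed
  have br: "inf b r = 0"
  proof (rule inf0)
    show "0 \<le> inf b r" using b0 r0 by simp
    show "inf b r \<le> inf (s *\<^sub>R a) b" using rsa by (simp add: le_infI1 le_infI2)
    show "inf (s *\<^sub>R a) b = 0" by (rule tab[OF s0])
  qed
  have "\<phi> (s *\<^sub>R a - x) \<le> \<phi> r" unfolding r_def by (rule mono) simp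
  hence "0 < \<phi> r" using L s pa by simp
  hence "\<phi> d = 0" using K[OF d0 b0 r0 db dr br] pb by simp
  hence "\<phi> (inf x (t *\<^sub>R a)) - \<phi> (inf x (s *\<^sub>R a)) = 0" unfolding d_def L(2) .
  thus ?thesis by simp
qed

definition F0 where "F0 x = \<phi> (inf x ((\<phi> x + 1) *\<^sub>R a))"

lemma F0_eq: assumes x: "0 \<le> x" and t: "\<phi> x < t" shows "F0 x = \<phi> (inf x (t *\<^sub>R a))"
proof -
  define M where "M = max t (\<phi> x + 1)"
  have "\<phi> (inf x (M *\<^sub>R a)) = \<phi> (inf x (t *\<^sub>R a))" by (rule const[OF x t]) (simp add: M_def)
  moreover have "\<phi> (inf x (M *\<^sub>R a)) = \<phi> (inf x ((\<phi> x + 1) *\<^sub>R a))" by (rule const[OF x]) (auto simp: M_def)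
  ultimately show ?thesis unfolding F0_def by simp
qed

lemma F0_bounds: assumes x: "0 \<le> x" shows "0 \<le> F0 x" "F0 x \<le> \<phi> x"
proof -
  have "0 \<le> \<phi> x + 1" using pf[OF x] by simp
  hence "0 \<le> inf x ((\<phi> x + 1) *\<^sub>R a)" using x ta0 by simp
  thus "0 \<le> F0 x" unfolding F0_def by (rule pf)
  show "F0 x \<le> \<phi> x" unfolding F0_def by (rule mono) simp
qed

lemma F0_add: assumes x: "0 \<le> x" and y: "0 \<le> y" shows "F0 (x + y) = F0 x + F0 y"
proof -
  define t where "t = \<phi> x + \<phi> y + 1"
  have px: "0 \<le> \<phi> x" and py: "0 \<le> \<phi> y" using pf x y by auto
  have t0: "0 \<le> t" using px py t_def by simp
  have xy: "0 \<le> x + y" using x y by simp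
  have e1: "F0 (x + y) = \<phi> (inf (x + y) (t *\<^sub>R a))" by (rule F0_eq[OF xy]) (simp add: L t_def)
  have e2: "F0 (x + y) = \<phi> (inf (x + y) ((2 * t) *\<^sub>R a))" by (rule F0_eq[OF xy]) (use px py in \<open>simp add: L t_def\<close>)
  have ex: "F0 x = \<phi> (inf x (t *\<^sub>R a))" by (rule F0_eq[OF x]) (use py in \<open>simp add: t_def\<close>)
  have ey: "F0 y = \<phi> (inf y (t *\<^sub>R a))" by (rule F0_eq[OF y]) (use px in \<open>simp add: t_def\<close>)
  have "inf (x + y) (t *\<^sub>R a) \<le> inf x (t *\<^sub>R a) + inf y (t *\<^sub>R a)" by (rule inf_add_le[OF x y ta0[OF t0]])
  hence 1: "F0 (x + y) \<le> F0 x + F0 y" unfolding e1 ex ey L(1)[symmetric] by (rule mono)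
  have "inf x (t *\<^sub>R a) + inf y (t *\<^sub>R a) \<le> inf (x + y) ((2 * t) *\<^sub>R a)"
  proof (rule le_infI)
    show "inf x (t *\<^sub>R a) + inf y (t *\<^sub>R a) \<le> x + y" by (intro add_mono) auto
    have "inf x (t *\<^sub>R a) + inf y (t *\<^sub>R a) \<le> t *\<^sub>R a + t *\<^sub>R a" by (intro add_mono) auto
    also have "\<dots> = (2 * t) *\<^sub>R a" by (simp add: scaleR_2 flip: scaleR_scaleR)
    finally show "inf x (t *\<^sub>R a) + inf y (t *\<^sub>R a) \<le> (2 * t) *\<^sub>R a" .
  qed
  hence 2: "F0 x + F0 y \<le> F0 (x + y)" unfolding e2 ex ey L(1)[symmetric] by (rule mono)
  show ?thesis using 1 2 by simp
qed

lemma F0_hom: assumes c: "0 \<le> c" and x: "0 \<le> x" shows "F0 (c *\<^sub>R x) = c * F0 x"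
proof (cases "c = 0")
  case True
  have "F0 0 = 0" using F0_add[of 0 0] by simp
  thus ?thesis using True by simp
next
  case False
  hence c0: "0 < c" using c by simp
  define t where "t = \<phi> x + 1"
  have cx: "0 \<le> c *\<^sub>R x" using c x by (simp add: scaleR_nonneg_nonneg)
  have "F0 (c *\<^sub>R x) = \<phi> (inf (c *\<^sub>R x) ((c * t) *\<^sub>R a))"
    by (rule F0_eq[OF cx]) (use c0 in \<open>simp add: L t_def\<close>)
  also have "inf (c *\<^sub>R x) ((c * t) *\<^sub>R a) = c *\<^sub>R inf x (t *\<^sub>R a)"
    using scale_inf[OF c, of x "t *\<^sub>R a"] by simp
  also have "\<phi> (c *\<^sub>R inf x (t *\<^sub>R a)) = c * F0 x" unfolding L F0_def t_def by simp
  finally show ?thesis .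
qed

definition "F = ext F0"
definition "G = (\<lambda>x. \<phi> x - F x)"

lemma F_lin: "linear F" and F_cone: "0 \<le> x \<Longrightarrow> F x = F0 x"
  unfolding F_def using ext[of F0, OF F0_add F0_hom] by auto

lemma G_lin: "linear G"
  unfolding G_def by (rule linearI) (simp_all add: L lin[OF F_lin] algebra_simps)

lemma F_rh: "riesz_hom F"
proof (rule RH[OF F_lin])
  show "posf F" unfolding posf_def using F_cone F0_bounds by simp
  fix x y :: 'a assume x: "0 \<le> x" and y: "0 \<le> y" and xy: "inf x y = 0"
  define t where "t = \<phi> x + \<phi> y + 1"
  have px: "0 \<le> \<phi> x" and py: "0 \<le> \<phi> y" using pf x y by auto
  have t0: "0 \<le> t" using px py t_def by simp
  have ex: "F x = \<phi> (inf x (t *\<^sub>R a))" unfolding F_cone[OF x] by (rule F0_eq[OF x]) (use py in \<open>simp add: t_def\<close>)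
  have ey: "F y = \<phi> (inf y (t *\<^sub>R a))" unfolding F_cone[OF y] by (rule F0_eq[OF y]) (use px in \<open>simp add: t_def\<close>)
  have u0: "0 \<le> inf x (t *\<^sub>R a)" "0 \<le> inf y (t *\<^sub>R a)" using x y ta0[OF t0] by auto
  have d1: "inf (inf x (t *\<^sub>R a)) (inf y (t *\<^sub>R a)) = 0"
    by (rule inf0[OF _ inf_mono[OF inf_le1 inf_le1] xy]) (use u0 in simp)
  have d2: "inf (inf x (t *\<^sub>R a)) b = 0"
    by (rule inf0[OF _ inf_mono[OF inf_le2 order_refl] tab[OF t0]]) (use u0 b0 in simp)
  have d3: "inf (inf y (t *\<^sub>R a)) b = 0"
    by (rule inf0[OF _ inf_mono[OF inf_le2 order_refl] tab[OF t0]]) (use u0 b0 in simp)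
  show "F x = 0 \<or> F y = 0" using K[OF u0 b0 d1 d2 d3] pb ex ey by auto
qed

lemma G_rh: "riesz_hom G"
proof (rule RH[OF G_lin])
  show "posf G" unfolding posf_def G_def using F_cone F0_bounds by simp
  fix x y :: 'a assume x: "0 \<le> x" and y: "0 \<le> y" and xy: "inf x y = 0"
  define t where "t = \<phi> x + \<phi> y + 1"
  have px: "0 \<le> \<phi> x" and py: "0 \<le> \<phi> y" using pf x y by auto
  have t0: "0 \<le> t" using px py t_def by simp
  have ex: "F x = \<phi> (inf x (t *\<^sub>R a))" unfolding F_cone[OF x] by (rule F0_eq[OF x]) (use py in \<open>simp add: t_def\<close>)
  have ey: "F y = \<phi> (inf y (t *\<^sub>R a))" unfolding F_cone[OF y] by (rule F0_eq[OF y]) (use px in \<open>simp add: t_def\<close>)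
  define p where "p = sup (x - t *\<^sub>R a) 0"
  define q where "q = sup (y - t *\<^sub>R a) 0"
  define r where "r = sup (t *\<^sub>R a - x - y) 0"
  have gx: "G x = \<phi> p"
  proof -
    have "G x = \<phi> (x - inf x (t *\<^sub>R a))" unfolding G_def ex L by simp
    also have "x - inf x (t *\<^sub>R a) = p" unfolding p_def by (rule diff_inf)
    finally show ?thesis .
  qed
  have gy: "G y = \<phi> q"
  proof -
    have "G y = \<phi> (y - inf y (t *\<^sub>R a))" unfolding G_def ey L by simp
    also have "y - inf y (t *\<^sub>R a) = q" unfolding q_def by (rule diff_inf)
    finally show ?thesis .
  qed
  have p0: "0 \<le> p" "0 \<le> q" "0 \<le> r" unfolding p_def q_def r_def by auto
  have "x - t *\<^sub>R a \<le> x" using ta0[OF t0] by simp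
  hence px': "p \<le> x" unfolding p_def using x by simp
  have "y - t *\<^sub>R a \<le> y" using ta0[OF t0] by simp
  hence py': "q \<le> y" unfolding q_def using y by simp
  have d1: "inf p q = 0"
    by (rule inf0[OF _ inf_mono[OF px' py'] xy]) (use p0 in simp)
  have d2: "inf p r = 0" unfolding p_def r_def by (rule sum_le0_disj) (use y in simp)
  have d3: "inf q r = 0" unfolding q_def r_def by (rule sum_le0_disj) (use x in simp)
  have "\<phi> (t *\<^sub>R a - x - y) \<le> \<phi> r" unfolding r_def by (rule mono) simp
  hence "0 < \<phi> r" using L pa t_def by simp
  thus "G x = 0 \<or> G y = 0" using K[OF p0 d1 d2 d3] gx gy by auto
qed

lemma decomp: "\<phi> = (\<lambda>x. F x + G x)" unfolding G_def by simp

end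

lemma DECOMP:
  fixes \<phi> :: "'a::vector_lattice \<Rightarrow> real"
  assumes l: "linear \<phi>" and p: "posf \<phi>" and k: "K3p \<phi>"
  shows "\<exists>f g. riesz_hom f \<and> riesz_hom g \<and> \<phi> = (\<lambda>x. f x + g x)"
proof (cases "\<exists>a b. 0 \<le> a \<and> 0 \<le> b \<and> inf a b = 0 \<and> \<phi> a \<noteq> 0 \<and> \<phi> b \<noteq> 0")
  case False
  hence "riesz_hom \<phi>" by (intro RH[OF l p]) blast
  thus ?thesis using rh_zero by fastforce
next
  case True
  then obtain a0 b where h: "0 \<le> a0" "0 \<le> b" "inf a0 b = 0" "\<phi> a0 \<noteq> 0" "\<phi> b \<noteq> 0" by blast
  have pa0: "0 < \<phi> a0" "0 < \<phi> b" using h p unfolding posf_def by (auto simp: order_le_less)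
  define a where "a = (1 / \<phi> a0) *\<^sub>R a0"
  have "dec \<phi> a b"
  proof
    show "0 \<le> a" unfolding a_def using h pa0 by (simp add: scaleR_nonneg_nonneg)
    show "inf a b = 0" unfolding a_def by (rule disj_scale1) (use h pa0 in auto)
    show "\<phi> a = 1" unfolding a_def lin(5)[OF l] using pa0 by simp
  qed (use l p k h pa0 lin[OF l] in auto)
  thus ?thesis using dec.F_rh dec.G_rh dec.decomp by blast
qed

lemma sub_ker: "linear (l::'a::vector_lattice \<Rightarrow> real) \<Longrightarrow> subspace {x. l x = 0}"
  unfolding subspace_def using lin[of l] by auto

lemma G_iff: "linear l \<Longrightarrow> grothendieck_subspace {x. l x = 0} \<longleftrightarrow> Gp l"
  unfolding grothendieck_subspace_def Gp_def using sub_ker by auto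

lemma rhT: "riesz_hom f \<Longrightarrow>
  f (sup (sup x y) 0 + inf (inf x y) 0) = max (max (f x) (f y)) 0 + min (min (f x) (f y)) 0"
proof -
  assume r: "riesz_hom f"
  have "f 0 = 0" using lin(4)[OF rh_lin[OF r]] .
  thus ?thesis using r lin(1)[OF rh_lin[OF r]] unfolding riesz_hom_def by simp
qed

lemma ONE:
  fixes g l :: "'a::vector_lattice \<Rightarrow> real"
  assumes g: "linear g" and l: "linear l" and k: "\<And>z. g z = 0 \<Longrightarrow> l z = 0"
  shows "\<exists>a. \<forall>z. l z = a * g z"
proof (cases "\<forall>z. g z = 0")
  case True thus ?thesis using k by auto
next
  case False
  then obtain w where w: "g w \<noteq> 0" by blast
  show ?thesis
  proof (intro exI allI)
    fix z
    have "g (z - (g z / g w) *\<^sub>R w) = 0" using w lin[OF g] by simp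
    hence "l (z - (g z / g w) *\<^sub>R w) = 0" by (rule k)
    hence "l z = (g z / g w) * l w" using lin[OF l] by simp
    thus "l z = l w / g w * g z" by simp
  qed
qed

lemma caseII:
  fixes g l :: "'a::vector_lattice \<Rightarrow> real"
  assumes g: "riesz_hom g" and l: "linear l" and k: "\<And>z. g z = 0 \<Longrightarrow> l z = 0"
  shows "Gp l"
proof -
  obtain a where a: "\<And>z. l z = a * g z" using ONE[OF rh_lin[OF g] l k] by blast
  show ?thesis unfolding Gp_def
  proof (intro allI impI)
    fix x y assume "l x = 0" "l y = 0"
    thus "l (sup (sup x y) 0 + inf (inf x y) 0) = 0"
      unfolding a rhT[OF g] by auto
  qed
qed

lemma arithI:
  fixes \<alpha> \<beta> a1 a2 b1 b2 :: real
  assumes "\<bar>\<alpha>\<bar> = 1" "\<bar>\<beta>\<bar> = 1" "\<alpha> * a1 + \<beta> * b1 = 0" "\<alpha> * a2 + \<beta> * b2 = 0"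
  shows "\<alpha> * (max (max a1 a2) 0 + min (min a1 a2) 0) + \<beta> * (max (max b1 b2) 0 + min (min b1 b2) 0) = 0"
proof -
  have "\<alpha> = 1 \<or> \<alpha> = -1" "\<beta> = 1 \<or> \<beta> = -1" using assms(1,2) by linarith+
  thus ?thesis using assms(3,4) by (auto simp: max_def min_def)
qed

theorem lemma4:
  fixes l :: "'a::vector_lattice \<Rightarrow> real"
  assumes "order_bounded_functional l"
  shows "grothendieck_subspace {x. l x = 0} \<longleftrightarrow>
         (\<exists>f g. riesz_hom f \<and> riesz_hom g \<and> modulus l = (\<lambda>x. f x + g x))"
proof -
  note ob = assms
  have ll: "linear l" by (rule ob_lin[OF ob])
  show ?thesis
  proof
    assume "grothendieck_subspace {x. l x = 0}"
    hence G: "Gp l" using G_iff[OF ll] by simp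
    have "K3p (modulus l)" unfolding K3p_def using K3m[OF ob G] by blast
    thus "\<exists>f g. riesz_hom f \<and> riesz_hom g \<and> modulus l = (\<lambda>x. f x + g x)"
      using DECOMP[OF mod_lin[OF ob] mod_pos[OF ob]] by blast
  next
    assume "\<exists>f g. riesz_hom f \<and> riesz_hom g \<and> modulus l = (\<lambda>x. f x + g x)"
    then obtain f g where f: "riesz_hom f" and g: "riesz_hom g" and m: "modulus l = (\<lambda>x. f x + g x)"
      by blast
    note fl = lin[OF rh_lin[OF f]] and gl = lin[OF rh_lin[OF g]]
    have kern: "l z = 0" if "f z = 0" "g z = 0" for z
    proof -
      have "\<bar>l z\<bar> \<le> modulus l (sup z 0 + sup (-z) 0)" by (rule mod_abs[OF ob])
      also have "\<dots> = \<bar>f z\<bar> + \<bar>g z\<bar>" unfolding m rh_abs[OF f] rh_abs[OF g] ..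
      finally show ?thesis using that by simp
    qed
    have "Gp l"
    proof (cases "\<exists>u v. f u = 1 \<and> g u = 0 \<and> f v = 0 \<and> g v = 1")
      case True
      then obtain u v where uv: "f u = 1" "g u = 0" "f v = 0" "g v = 1" by blast
      define \<alpha> where "\<alpha> = l u"
      define \<beta> where "\<beta> = l v"
      have rep: "l x = \<alpha> * f x + \<beta> * g x" for x
      proof -
        have "f (x - f x *\<^sub>R u - g x *\<^sub>R v) = 0" "g (x - f x *\<^sub>R u - g x *\<^sub>R v) = 0"
          using uv fl gl by simp_all
        hence "l (x - f x *\<^sub>R u - g x *\<^sub>R v) = 0" by (rule kern)
        thus ?thesis unfolding \<alpha>_def \<beta>_def using lin[OF ll] by (simp add: algebra_simps)
      qed
      define u' where "u' = sup u 0"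
      define v' where "v' = sup v 0"
      have u': "0 \<le> u'" "f u' = 1" "g u' = 0" unfolding u'_def using rh_pp[OF f] rh_pp[OF g] uv by auto
      have v': "0 \<le> v'" "f v' = 0" "g v' = 1" unfolding v'_def using rh_pp[OF f] rh_pp[OF g] uv by auto
      define g' where "g' = (\<lambda>x. \<bar>\<alpha>\<bar> * f x + \<bar>\<beta>\<bar> * g x)"
      have pf: "0 \<le> f x" "0 \<le> g x" if "0 \<le> x" for x
        using rh_pos[OF f] rh_pos[OF g] that unfolding posf_def by auto
      have g'l: "linear g'" unfolding g'_def by (rule linearI) (simp_all add: fl gl algebra_simps)
      have g'p: "posf g'" unfolding posf_def g'_def using pf by simp
      have le1: "functional_le l g'" unfolding functional_le_def g'_def
      proof (intro allI impI)
        fix x :: 'a assume "0 \<le> x"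
        hence "\<alpha> * f x \<le> \<bar>\<alpha>\<bar> * f x" "\<beta> * g x \<le> \<bar>\<beta>\<bar> * g x" using pf
          by (simp_all add: mult_right_mono)
        thus "l x \<le> \<bar>\<alpha>\<bar> * f x + \<bar>\<beta>\<bar> * g x" unfolding rep by linarith
      qed
      have le2: "functional_le (\<lambda>x. - l x) g'" unfolding functional_le_def g'_def
      proof (intro allI impI)
        fix x :: 'a assume "0 \<le> x"
        hence "- \<alpha> * f x \<le> \<bar>\<alpha>\<bar> * f x" "- \<beta> * g x \<le> \<bar>\<beta>\<bar> * g x"
          using pf mult_right_mono[of "-\<alpha>" "\<bar>\<alpha>\<bar>" "f x"] mult_right_mono[of "-\<beta>" "\<bar>\<beta>\<bar>" "g x"]
          by auto
        thus "- l x \<le> \<bar>\<alpha>\<bar> * f x + \<bar>\<beta>\<bar> * g x" unfolding rep by linarith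
      qed
      have mg: "functional_le (modulus l) g'"
        by (rule ism_parts(4)[OF ob mod_ism[OF ob] pos_ob[OF g'l g'p] le1 le2])
      have "modulus l u' \<le> g' u'" "modulus l v' \<le> g' v'" using mg u' v' unfolding functional_le_def by auto
      moreover have "l u' \<le> modulus l u'" "- l u' \<le> modulus l u'" "l v' \<le> modulus l v'" "- l v' \<le> modulus l v'"
        using mod_ge[OF ob u'(1)] mod_ge[OF ob v'(1)] by auto
      ultimately have "\<bar>\<alpha>\<bar> = 1" "\<bar>\<beta>\<bar> = 1" unfolding g'_def m using u' v' rep[of u'] rep[of v'] by auto
      thus ?thesis unfolding Gp_def
      proof (intro allI impI)
        fix x y assume "l x = 0" "l y = 0"
        thus "l (sup (sup x y) 0 + inf (inf x y) 0) = 0"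
          unfolding rep rhT[OF f] rhT[OF g] by (intro arithI[OF \<open>\<bar>\<alpha>\<bar> = 1\<close> \<open>\<bar>\<beta>\<bar> = 1\<close>]) auto
      qed
    next
      case False
      show ?thesis
      proof (cases "\<exists>u. f u = 1 \<and> g u = 0")
        case False
        have "f z = 0" if "g z = 0" for z
        proof (rule ccontr)
          assume "f z \<noteq> 0"
          hence "f ((1 / f z) *\<^sub>R z) = 1 \<and> g ((1 / f z) *\<^sub>R z) = 0" using that fl gl by simp
          thus False using False by blast
        qed
        thus ?thesis using caseII[OF g ll] kern by blast
      next
        case True
        then obtain u where u: "f u = 1" "g u = 0" by blast
        have nv: "\<not> (\<exists>v. f v = 0 \<and> g v = 1)" using False u by blast
        have "g z = 0" if "f z = 0" for z
        proof (rule ccontr)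
          assume "g z \<noteq> 0"
          hence "f ((1 / g z) *\<^sub>R z) = 0 \<and> g ((1 / g z) *\<^sub>R z) = 1" using that fl gl by simp
          thus False using nv by blast
        qed
        thus ?thesis using caseII[OF f ll] kern by blast
      qed
    qed
    thus "grothendieck_subspace {x. l x = 0}" using G_iff[OF ll] by simp
  qed
qed

end
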